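(* Let $d>k>1$. For any ground-truth heads $\mathbf{w}_{\ast,1},\dots,\mathbf{w}_{\ast,M}\in\mathbb{R}^k$, any full-rank $\mathbf{B}_0\in\mathbb{R}^{d\times k}$, any initial head $\mathbf{w}_0\in\mathbb{R}^k$, any $\delta_0\in(0,1/2]$, any step size $\alpha>0$ and any number of rounds $T$, there exists $\mathbf{B}_\ast\in\mathbb{R}^{d\times k}$ with orthonormal columns such that $\operatorname{dist}(\mathbf{B}_0,\mathbf{B}_\ast)=\delta_0$, $\mathbf{B}_\ast\bar{\mathbf{w}}_\ast\in\operatorname{col}(\mathbf{B}_0)$, and $\operatorname{dist}(\mathbf{B}_T^{\mathrm{D\text{-}GD}},\mathbf{B}_\ast)\ge 0.7\,\delta_0$, where $\mathbf{B}_T^{\mathrm{D\text{-}GD}}$ is the representation produced after $T$ rounds of D-GD with step size $\alpha$ from $(\mathbf{B}_0,\mathbf{w}_0)$ in the system with ground-truth representation $\mathbf{B}_\ast$ and heads $\{\mathbf{w}_{\ast,i}\}$.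
   Context: Client $i$'s population loss is $f_i(\mathbf{B},\mathbf{w})=\tfrac12\|\mathbf{B}\mathbf{w}-\mathbf{B}_\ast\mathbf{w}_{\ast,i}\|_2^2$; $\bar{\mathbf{w}}_\ast=\frac1M\sum_i\mathbf{w}_{\ast,i}$. D-GD (distributed gradient descent, i.e. FedAvg with one local step and all clients participating) on $\frac1M\sum_i f_i$: $\mathbf{B}_{t+1}=\mathbf{B}_t-\alpha(\mathbf{B}_t\mathbf{w}_t-\mathbf{B}_\ast\bar{\mathbf{w}}_\ast)\mathbf{w}_t^\top$, $\mathbf{w}_{t+1}=\mathbf{w}_t-\alpha\mathbf{B}_t^\top(\mathbf{B}_t\mathbf{w}_t-\mathbf{B}_\ast\bar{\mathbf{w}}_\ast)$. Principal angle distance: for full-rank $\mathbf{B}_1,\mathbf{B}_2\in\mathbb{R}^{d\times k}$, $\operatorname{dist}(\mathbf{B}_1,\mathbf{B}_2)=\|\bar{\mathbf{B}}_{1,\perp}^\top\bar{\mathbf{B}}_2\|_2$, where the columns of $\bar{\mathbf{B}}_{1,\perp}$ and $\bar{\mathbf{B}}_2$ are orthonormal bases of $\operatorname{col}(\mathbf{B}_1)^\perp$ and $\operatorname{col}(\mathbf{B}_2)$. *)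

theory Defs
  imports "HOL-Analysis.Analysis"
begin

definition colsp :: "real^'k^'d \<Rightarrow> (real^'d) set" where
  "colsp B = span (columns B)"

definition is_onb :: "(real^'d) set \<Rightarrow> (real^'d) set \<Rightarrow> bool" where
  "is_onb P S \<longleftrightarrow> finite P \<and> P \<subseteq> S \<and> pairwise orthogonal P \<and>
     (\<forall>p\<in>P. norm p = 1) \<and> span P = S"

text \<open>Principal angle distance dist(B1,B2) = spectral norm of Bbar_{1,perp}^T Bbar_2,
  where Bbar_2 (d x k) has orthonormal columns spanning col(B2) and the columns of
  Bbar_{1,perp} form an orthonormal basis P of col(B1)^perp; for a vector y,
  the norm of Bbar_{1,perp}^T y is sqrt (sum over p in P of (p . y)^2).\<close>
definition pdist :: "real^'k^'d \<Rightarrow> real^'k^'d \<Rightarrow> real" where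
  "pdist B1 B2 =
    (let U = (SOME U :: real^'k^'d. transpose U ** U = mat 1 \<and> colsp U = colsp B2);
         P = (SOME P. is_onb P (orthogonal_comp (colsp B1)))
     in Sup {sqrt (\<Sum>p\<in>P. (p \<bullet> (U *v v))\<^sup>2) | v :: real^'k. norm v = 1})"

definition outer :: "real^'d \<Rightarrow> real^'k \<Rightarrow> real^'k^'d" where
  "outer r w = (\<chi> i j. r $ i * w $ j)"

text \<open>One D-GD step on (1/M) sum_i f_i with target y = B_* wbar_*.\<close>
definition dgd_step :: "real \<Rightarrow> real^'d \<Rightarrow> ((real^'k^'d) \<times> (real^'k)) \<Rightarrow> ((real^'k^'d) \<times> (real^'k))" where
  "dgd_step \<alpha> y Bw = (let B = fst Bw; w = snd Bw; r = B *v w - y in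
     (B - \<alpha> *\<^sub>R outer r w, w - \<alpha> *\<^sub>R (transpose B *v r)))"

definition wbar :: "nat \<Rightarrow> (nat \<Rightarrow> real^'k) \<Rightarrow> real^'k" where
  "wbar M ws = (1 / real M) *\<^sub>R (\<Sum>i=1..M. ws i)"

definition dgd :: "real \<Rightarrow> real^'k^'d \<Rightarrow> nat \<Rightarrow> (nat \<Rightarrow> real^'k) \<Rightarrow>
    real^'k^'d \<Rightarrow> real^'k \<Rightarrow> nat \<Rightarrow> (real^'k^'d) \<times> (real^'k)" where
  "dgd \<alpha> Bs M ws B0 w0 t = (dgd_step \<alpha> (Bs *v wbar M ws) ^^ t) (B0, w0)"

end

theory Submission
  imports Defs
begin


definition gval :: "(real^'d) set \<Rightarrow> real^'d \<Rightarrow> real" where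
  "gval P x = sqrt (\<Sum>p\<in>P. (p \<bullet> x)\<^sup>2)"

lemma onb_exists: "\<exists>P. is_onb P (orthogonal_comp (S :: (real^'d) set))"
proof -
  obtain B where "B \<subseteq> orthogonal_comp S" "pairwise orthogonal B"
    "\<And>x. x \<in> B \<Longrightarrow> norm x = 1" "independent B" "span B = orthogonal_comp S"
    using orthonormal_basis_subspace[OF subspace_orthogonal_comp] by metis
  then show ?thesis unfolding is_onb_def using independent_imp_finite by blast
qed

lemma onb_expand:
  assumes P: "is_onb P W" and t: "t \<in> span P"
  shows "t = (\<Sum>p\<in>P. (p \<bullet> t) *\<^sub>R p)"
  using t
proof (induction rule: span_induct)
  case (step b)
  have fin: "finite P" using P by (simp add: is_onb_def)
  have "(\<Sum>p\<in>P. (p \<bullet> b) *\<^sub>R p) = (\<Sum>p\<in>P. (if p = b then p else 0))"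
  proof (rule sum.cong)
    fix p assume "p \<in> P"
    show "(p \<bullet> b) *\<^sub>R p = (if p = b then p else 0)"
    proof (cases "p = b")
      case True
      then have "norm p = 1" using P \<open>p \<in> P\<close> by (simp add: is_onb_def)
      then show ?thesis using True by (simp add: norm_eq_1)
    next
      case False
      then have "orthogonal p b" using P \<open>p \<in> P\<close> step by (auto simp: is_onb_def pairwise_def)
      then show ?thesis using False by (simp add: orthogonal_def)
    qed
  qed simp
  also have "\<dots> = b" using fin step by (simp add: sum.delta)
  finally show ?case by simp
next
  case base
  show ?case unfolding subspace_def
    apply (intro conjI ballI allI impI)
      apply simp_all
    subgoal premises h for x y
    proof -
      have "(\<Sum>p\<in>P. (p \<bullet> (x + y)) *\<^sub>R p) = (\<Sum>p\<in>P. (p \<bullet> x) *\<^sub>R p) + (\<Sum>p\<in>P. (p \<bullet> y) *\<^sub>R p)"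
        by (simp add: inner_add_right scaleR_add_left sum.distrib)
      then show ?thesis using h by metis
    qed
    subgoal premises h for c x
    proof -
      have "(\<Sum>p\<in>P. (c * (p \<bullet> x)) *\<^sub>R p) = c *\<^sub>R (\<Sum>p\<in>P. (p \<bullet> x) *\<^sub>R p)"
        by (simp add: scaleR_sum_right)
      then show ?thesis using h by metis
    qed
    done
qed

lemma onb_norm:
  assumes P: "is_onb P W" and t: "t \<in> span P"
  shows "(\<Sum>p\<in>P. (p \<bullet> t)\<^sup>2) = (norm t)\<^sup>2"
proof -
  have "(norm t)\<^sup>2 = t \<bullet> t" by (simp add: power2_norm_eq_inner)
  also have "\<dots> = t \<bullet> (\<Sum>p\<in>P. (p \<bullet> t) *\<^sub>R p)" using onb_expand[OF P t] by simp
  also have "\<dots> = (\<Sum>p\<in>P. (p \<bullet> t)\<^sup>2)"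
    by (simp add: inner_sum_right power2_eq_square inner_commute)
  finally show ?thesis by simp
qed

lemma gval_dec:
  assumes P: "is_onb P (orthogonal_comp S)" and s: "s \<in> S" and t: "t \<in> orthogonal_comp S"
  shows "gval P (s + t) = norm t"
proof -
  have "\<And>p. p \<in> P \<Longrightarrow> p \<bullet> (s + t) = p \<bullet> t"
  proof -
    fix p assume "p \<in> P"
    then have "p \<in> orthogonal_comp S" using P by (auto simp: is_onb_def)
    then have "p \<bullet> s = 0" using s by (auto simp: orthogonal_comp_def orthogonal_def inner_commute)
    then show "p \<bullet> (s + t) = p \<bullet> t" by (simp add: inner_add_right)
  qed
  then have "(\<Sum>p\<in>P. (p \<bullet> (s+t))\<^sup>2) = (\<Sum>p\<in>P. (p \<bullet> t)\<^sup>2)" by simp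
  also have "\<dots> = (norm t)\<^sup>2" using onb_norm[OF P] t P by (simp add: is_onb_def)
  finally show ?thesis by (simp add: gval_def)
qed

lemma decomp:
  fixes x :: "real^'d"
  obtains s t where "s \<in> span X" "t \<in> orthogonal_comp (span X)" "x = s + t"
proof -
  obtain y z where "y \<in> span X" "\<And>w. w \<in> span X \<Longrightarrow> orthogonal z w" "x = y + z"
    using orthogonal_subspace_decomp_exists by metis
  then have "z \<in> orthogonal_comp (span X)"
    by (auto simp: orthogonal_comp_def orthogonal_commute)
  then show ?thesis using that \<open>y \<in> span X\<close> \<open>x = y + z\<close> by blast
qed

lemma gval_mono:
  fixes x :: "real^'d"
  assumes "span X \<subseteq> span Y"
    and P: "is_onb P (orthogonal_comp (span X))" and Q: "is_onb Q (orthogonal_comp (span Y))"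
  shows "gval Q x \<le> gval P x"
proof -
  obtain s t where s: "s \<in> span X" and t: "t \<in> orthogonal_comp (span X)" and x: "x = s + t"
    using decomp by blast
  obtain s' t' where s': "s' \<in> span Y" and t': "t' \<in> orthogonal_comp (span Y)" and x': "x = s' + t'"
    using decomp by blast
  have "s' - s \<in> span Y" using s s' assms(1) by (auto intro: span_diff)
  then have o: "orthogonal t' (s' - s)" using t' by (auto simp: orthogonal_comp_def orthogonal_commute)
  have "t = t' + (s' - s)" using x x' by (simp add: algebra_simps)
  then have "(norm t)\<^sup>2 = (norm t')\<^sup>2 + (norm (s'-s))\<^sup>2" using norm_add_Pythagorean[OF o] by simp
  then have "norm t' \<le> norm t" by (smt (verit) norm_ge_zero power2_le_imp_le zero_le_power2)
  then show ?thesis using gval_dec[OF P s t] gval_dec[OF Q s' t'] x x' by simp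
qed

lemma gval_le:
  fixes x :: "real^'d"
  assumes P: "is_onb P (orthogonal_comp (span X))"
  shows "gval P x \<le> norm x"
proof -
  obtain s t where s: "s \<in> span X" and t: "t \<in> orthogonal_comp (span X)" and x: "x = s + t"
    using decomp by blast
  have o: "orthogonal s t" using s t by (auto simp: orthogonal_comp_def)
  have "(norm x)\<^sup>2 = (norm s)\<^sup>2 + (norm t)\<^sup>2" using norm_add_Pythagorean[OF o] x by simp
  then have "norm t \<le> norm x" by (smt (verit) norm_ge_zero power2_le_imp_le zero_le_power2)
  then show ?thesis using gval_dec[OF P s t] x by simp
qed



lemma ortho_inner:
  fixes A :: "real^'k^'d"
  assumes "transpose A ** A = mat 1"
  shows "(A *v v) \<bullet> (A *v w) = v \<bullet> w"
proof -
  have "(A *v v) \<bullet> (A *v w) = (v v* transpose A) \<bullet> (A *v w)" by simp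
  also have "\<dots> = v \<bullet> (transpose A *v (A *v w))" by (rule dot_lmul_matrix)
  also have "\<dots> = v \<bullet> w" by (simp add: matrix_vector_mul_assoc assms)
  finally show ?thesis .
qed

lemma ortho_norm:
  fixes A :: "real^'k^'d"
  assumes "transpose A ** A = mat 1"
  shows "norm (A *v v) = norm v"
  using ortho_inner[OF assms, of v v] by (simp add: norm_eq_sqrt_inner)

lemma inner_ortho:
  fixes A :: "real^'k^'d"
  assumes "\<And>v w. (A *v v) \<bullet> (A *v w) = v \<bullet> w"
  shows "transpose A ** A = mat 1"
proof -
  have "(transpose A ** A) *v w = w" for w
  proof -
    define z where "z = (transpose A ** A) *v w - w"
    have "z \<bullet> ((transpose A ** A) *v w) = (A *v z) \<bullet> (A *v w)"
      by (metis dot_lmul_matrix matrix_vector_mul_assoc vector_transpose_matrix)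
    then have "z \<bullet> z = 0" using assms[of z w] by (simp add: z_def inner_diff_right)
    then show ?thesis by (simp add: z_def)
  qed
  then show ?thesis by (simp add: matrix_eq)
qed

lemma colsp_iff:
  fixes A :: "real^'k^'d"
  shows "x \<in> colsp A \<longleftrightarrow> (\<exists>v. x = A *v v)"
proof
  assume "x \<in> colsp A"
  moreover have "colsp A \<subseteq> range ((*v) A)"
    unfolding colsp_def
  proof (rule span_minimal)
    show "columns A \<subseteq> range ((*v) A)"
      by (auto simp: columns_image_basis)
    show "subspace (range ((*v) A))"
      by (rule linear_subspace_image[OF matrix_vector_mul_linear subspace_UNIV])
  qed
  ultimately show "\<exists>v. x = A *v v" by blast
next
  assume "\<exists>v. x = A *v v"
  then show "x \<in> colsp A" using matrix_vector_mult_in_columnspace by (auto simp: colsp_def)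
qed

lemma outer_mult: "outer r w *v v = (w \<bullet> v) *\<^sub>R r"
  by (simp add: vec_eq_iff outer_def matrix_vector_mult_def inner_vec_def sum_distrib_left
      mult.commute mult.left_commute)

lemma scaleR_mv: "(c *\<^sub>R A) *v v = c *\<^sub>R (A *v (v::real^'k) :: real^'d)"
  by (simp add: vec_eq_iff matrix_vector_mult_def sum_distrib_left mult_ac)

lemma dgd_colsp:
  assumes y: "y \<in> colsp B0"
  shows "colsp (fst ((dgd_step \<alpha> y ^^ t) (B0, w0))) \<subseteq> colsp B0"
proof (induction t)
  case 0
  then show ?case by simp
next
  case (Suc t)
  obtain B w where Bw: "(dgd_step \<alpha> y ^^ t) (B0, w0) = (B, w)" by fastforce
  with Suc have IH: "colsp B \<subseteq> colsp B0" by simp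
  have "x \<in> colsp B0" if hx: "x \<in> colsp (B - \<alpha> *\<^sub>R outer (B *v w - y) w)" for x
  proof -
    obtain v where v: "x = (B - \<alpha> *\<^sub>R outer (B *v w - y) w) *v v" using hx unfolding colsp_iff by blast
    have x: "x = B *v v - (\<alpha> * (w \<bullet> v)) *\<^sub>R (B *v w - y)"
      using v by (simp add: matrix_vector_mult_diff_rdistrib scaleR_mv outer_mult)
    have "B *v v \<in> colsp B0" by (rule subsetD[OF IH]) (auto simp: colsp_iff)
    have "B *v w \<in> colsp B0" by (rule subsetD[OF IH]) (auto simp: colsp_iff)
    with \<open>B *v v \<in> colsp B0\<close> show ?thesis using x y unfolding colsp_def
      by (simp add: span_diff span_scale)
  qed
  moreover have "fst ((dgd_step \<alpha> y ^^ Suc t) (B0, w0)) = B - \<alpha> *\<^sub>R outer (B *v w - y) w"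
    using Bw by (simp add: dgd_step_def Let_def)
  ultimately show ?case by auto
qed



definition Uof :: "real^'k^'d \<Rightarrow> real^'k^'d" where
  "Uof B2 = (SOME U :: real^'k^'d. transpose U ** U = mat 1 \<and> colsp U = colsp B2)"
definition Pof :: "real^'k^'d \<Rightarrow> (real^'d) set" where
  "Pof B1 = (SOME P. is_onb P (orthogonal_comp (colsp B1)))"

lemma pdist_eq: "pdist B1 B2 = Sup {gval (Pof B1) (Uof B2 *v v) | v. norm v = 1}"
  by (simp add: pdist_def gval_def Let_def Uof_def Pof_def)

lemma Pof: "is_onb (Pof B1) (orthogonal_comp (colsp B1))"
  unfolding Pof_def using onb_exists by (rule someI_ex)

lemma Uof:
  assumes "transpose B2 ** B2 = mat 1"
  shows "transpose (Uof B2) ** Uof B2 = mat 1 \<and> colsp (Uof B2) = colsp B2"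
  unfolding Uof_def by (rule someI_ex) (use assms in blast)

lemma pdist_mono:
  fixes B0 B1 B2 :: "real^'k^'d"
  assumes "transpose B2 ** B2 = mat 1" and "colsp B1 \<subseteq> colsp B0"
  shows "pdist B0 B2 \<le> pdist B1 B2"
proof -
  have U: "transpose (Uof B2) ** Uof B2 = mat 1" using Uof[OF assms(1)] by blast
  have ne: "{gval (Pof B0) (Uof B2 *v v) | v. norm v = 1} \<noteq> {}"
    using norm_axis_1 by blast
  have "bdd_above {gval (Pof B1) (Uof B2 *v v) | v. norm v = 1}"
  proof (rule bdd_aboveI[where M=1], clarify)
    fix v :: "real^'k" assume "norm v = 1"
    have "gval (Pof B1) (Uof B2 *v v) \<le> norm (Uof B2 *v v)"
      using gval_le[of "Pof B1" "columns B1"] Pof[of B1] by (simp add: colsp_def)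
    then show "gval (Pof B1) (Uof B2 *v v) \<le> 1" using ortho_norm[OF U] \<open>norm v = 1\<close> by simp
  qed
  moreover have "gval (Pof B0) x \<le> gval (Pof B1) x" for x
    using gval_mono[of "columns B1" "columns B0" "Pof B1" "Pof B0" x] Pof[of B1] Pof[of B0] assms(2)
    by (simp add: colsp_def)
  ultimately show ?thesis unfolding pdist_eq
    by (intro cSup_mono[OF ne]) blast+
qed



theorem proposition1:
  fixes ws :: "nat \<Rightarrow> real^'k" and B0 :: "real^'k^'d" and w0 :: "real^'k"
    and M T :: nat and \<delta>0 \<alpha> :: real
  assumes "CARD('d) > CARD('k)" and "CARD('k) > 1"
    and "M \<ge> 1"
    and "rank B0 = CARD('k)"
    and "0 < \<delta>0" and "\<delta>0 \<le> 1/2"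
    and "\<alpha> > 0"
  shows "\<exists>Bs :: real^'k^'d. transpose Bs ** Bs = mat 1
           \<and> pdist B0 Bs = \<delta>0
           \<and> Bs *v wbar M ws \<in> colsp B0
           \<and> pdist (fst (dgd \<alpha> Bs M ws B0 w0 T)) Bs \<ge> 0.7 * \<delta>0"
proof -
  define S0 where "S0 = colsp B0"
  have subS0: "subspace S0" by (simp add: S0_def colsp_def)
  have dimc: "dim (columns B0) = CARD('k)" using assms(4) by (simp add: column_rank_def)
  have dimS0: "dim S0 = CARD('k)" using dimc by (simp add: S0_def colsp_def dim_span)
  obtain Q where Q: "Q \<subseteq> S0" "pairwise orthogonal Q" "\<And>x. x \<in> Q \<Longrightarrow> norm x = 1"
     "independent Q" "card Q = dim S0"
    using orthonormal_basis_subspace[OF subS0] by metis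
  have finQ: "finite Q" using Q(4) independent_imp_finite by blast
  obtain f where f: "bij_betw f (UNIV :: 'k set) Q"
    using bij_betw_iff_card[of "UNIV :: 'k set" Q] finQ Q(5) dimS0 by auto
  have fQ: "f j \<in> Q" for j using f by (auto simp: bij_betw_def)
  define G :: "real^'k^'d" where "G = (\<chi> i j. f j $ i)"
  have GtG: "transpose G ** G = mat 1"
  proof -
    have "(\<Sum>m\<in>UNIV. f i $ m * f j $ m) = (if i = j then 1 else 0)" for i j
    proof -
      have e: "(\<Sum>m\<in>UNIV. f i $ m * f j $ m) = f i \<bullet> f j" by (simp add: inner_vec_def)
      show ?thesis
      proof (cases "i = j")
        case True
        then show ?thesis using e Q(3)[OF fQ[of j]] by (simp add: norm_eq_1)
      next
        case False
        then have "f i \<noteq> f j" using f by (auto simp: bij_betw_def inj_on_def)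
        then have "orthogonal (f i) (f j)" using Q(2) fQ by (auto simp: pairwise_def)
        then show ?thesis using e False by (simp add: orthogonal_def)
      qed
    qed
    then show ?thesis
      by (simp add: vec_eq_iff matrix_matrix_mult_def transpose_def mat_def G_def)
  qed
  have GS0: "G *v v \<in> S0" for v
  proof -
    have "columns G \<subseteq> S0"
      using Q(1) fQ by (auto simp: columns_def column_def G_def)
    then have "span (columns G) \<subseteq> S0" using subS0 by (rule span_minimal)
    then show ?thesis using matrix_vector_mult_in_columnspace by blast
  qed
  have "dim (columns B0) < DIM(real^'d)" using dimc assms(1) by simp
  then obtain x0 :: "real^'d" where x0: "x0 \<noteq> 0" "\<And>y. y \<in> span (columns B0) \<Longrightarrow> orthogonal x0 y"
    using orthogonal_to_subspace_exists by metis
  define e where "e = x0 /\<^sub>R norm x0"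
  have ne: "norm e = 1" using x0(1) by (simp add: e_def)
  have eS0: "e \<bullet> y = 0" if "y \<in> S0" for y
    using x0(2)[of y] that by (simp add: e_def S0_def colsp_def orthogonal_def)
  have "2 \<le> DIM(real^'k)" using assms(2) by simp
  then obtain y0 :: "real^'k" where y0: "y0 \<noteq> 0" "orthogonal (wbar M ws) y0"
    using orthogonal_to_vector_exists by metis
  define u where "u = y0 /\<^sub>R norm y0"
  have nu: "norm u = 1" using y0(1) by (simp add: u_def)
  have uw: "u \<bullet> wbar M ws = 0" using y0(2) by (simp add: u_def orthogonal_def inner_commute)
  define q where "q = G *v u"
  have qS0: "q \<in> S0" by (simp add: q_def GS0)
  have qq: "q \<bullet> q = 1" using ortho_inner[OF GtG, of u u] nu by (simp add: q_def norm_eq_1)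
  have eq: "e \<bullet> q = 0" using eS0 qS0 by blast
  have Gq: "(G *v v) \<bullet> q = u \<bullet> v" for v using ortho_inner[OF GtG, of v u] by (simp add: q_def inner_commute)
  have Ge: "(G *v v) \<bullet> e = 0" for v using eS0[OF GS0[of v]] by (simp add: inner_commute)
  define c where "c = sqrt (1 - \<delta>0\<^sup>2)"
  have c2: "c\<^sup>2 = 1 - \<delta>0\<^sup>2"
  proof -
    have "\<delta>0\<^sup>2 \<le> 1" using assms(5,6) by (simp add: power_le_one)
    then show ?thesis by (simp add: c_def)
  qed
  define z where "z = (c - 1) *\<^sub>R q + \<delta>0 *\<^sub>R e"
  define Bs where "Bs = G + outer z u"
  have Bsv: "Bs *v v = G *v v + (u \<bullet> v) *\<^sub>R z" for v
    by (simp add: Bs_def matrix_vector_mult_add_rdistrib outer_mult)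
  have Gz: "(G *v v) \<bullet> z = (c - 1) * (u \<bullet> v)" for v
    by (simp add: z_def inner_add_right Gq Ge)
  have zz: "z \<bullet> z = (c - 1)\<^sup>2 + \<delta>0\<^sup>2"
    using qq eq ne by (simp add: z_def inner_add_left inner_add_right inner_commute power2_eq_square norm_eq_1 algebra_simps)
  have BsI: "transpose Bs ** Bs = mat 1"
  proof (rule inner_ortho)
    fix v w :: "real^'k"
    have "(Bs *v v) \<bullet> (Bs *v w) = (G *v v) \<bullet> (G *v w) + (u \<bullet> w) * ((G *v v) \<bullet> z)
       + (u \<bullet> v) * ((G *v w) \<bullet> z) + (u \<bullet> v) * (u \<bullet> w) * (z \<bullet> z)"
      by (simp add: Bsv inner_add_left inner_add_right inner_commute algebra_simps)
    also have "\<dots> = v \<bullet> w + (u \<bullet> v) * (u \<bullet> w) * (c\<^sup>2 + \<delta>0\<^sup>2 - 1)"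
      by (simp add: ortho_inner[OF GtG] Gz zz algebra_simps power2_eq_square)
    also have "\<dots> = v \<bullet> w" using c2 by simp
    finally show "(Bs *v v) \<bullet> (Bs *v w) = v \<bullet> w" .
  qed
  have Bsw: "Bs *v wbar M ws \<in> colsp B0"
    using GS0[of "wbar M ws"] by (simp add: Bsv uw S0_def)
  have gvalBs: "gval (Pof B0) (Bs *v v) = \<delta>0 * \<bar>u \<bullet> v\<bar>" for v
  proof -
    have dec: "Bs *v v = (G *v v + ((u \<bullet> v) * (c - 1)) *\<^sub>R q) + ((u \<bullet> v) * \<delta>0) *\<^sub>R e"
      by (simp add: Bsv z_def algebra_simps)
    have s: "G *v v + ((u \<bullet> v) * (c - 1)) *\<^sub>R q \<in> colsp B0"
      using GS0[of v] qS0 subS0 unfolding S0_def by (simp add: subspace_add subspace_scale)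
    have t: "((u \<bullet> v) * \<delta>0) *\<^sub>R e \<in> orthogonal_comp (colsp B0)"
      using eS0 by (auto simp: orthogonal_comp_def orthogonal_def S0_def inner_commute)
    show ?thesis using gval_dec[OF Pof s t] dec assms(5) by (simp add: ne abs_mult)
  qed
  have U: "transpose (Uof Bs) ** Uof Bs = mat 1" "colsp (Uof Bs) = colsp Bs" using Uof[OF BsI] by blast+
  have pd0: "pdist B0 Bs = \<delta>0"
    unfolding pdist_eq
  proof (rule cSup_eq_maximum)
    have "Bs *v u \<in> colsp (Uof Bs)" using U(2) by (auto simp: colsp_iff)
    then obtain v0 where v0: "Bs *v u = Uof Bs *v v0" by (auto simp: colsp_iff)
    have "norm v0 = 1" using ortho_norm[OF U(1), of v0] ortho_norm[OF BsI, of u] v0 nu by simp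
    moreover have "gval (Pof B0) (Uof Bs *v v0) = \<delta>0"
      using gvalBs[of u] v0 nu by (simp add: norm_eq_1)
    ultimately show "\<delta>0 \<in> {gval (Pof B0) (Uof Bs *v v) | v. norm v = 1}" by blast
  next
    fix x assume "x \<in> {gval (Pof B0) (Uof Bs *v v) | v. norm v = 1}"
    then obtain v where v: "norm v = 1" "x = gval (Pof B0) (Uof Bs *v v)" by blast
    have "Uof Bs *v v \<in> colsp (Uof Bs)" by (auto simp: colsp_iff)
    then have "Uof Bs *v v \<in> colsp Bs" using U(2) by simp
    then obtain v' where v': "Uof Bs *v v = Bs *v v'" by (auto simp: colsp_iff)
    have nv': "norm v' = 1" using ortho_norm[OF U(1), of v] ortho_norm[OF BsI, of v'] v' v(1) by simp
    have "\<bar>u \<bullet> v'\<bar> \<le> 1" using Cauchy_Schwarz_ineq2[of u v'] nu nv' by simp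
    then have "\<delta>0 * \<bar>u \<bullet> v'\<bar> \<le> \<delta>0" using assms(5) by (simp add: mult_le_cancel_left1)
    then show "x \<le> \<delta>0" using v(2) v' gvalBs by simp
  qed
  have "colsp (fst (dgd \<alpha> Bs M ws B0 w0 T)) \<subseteq> colsp B0"
    unfolding dgd_def using dgd_colsp[OF Bsw] by blast
  then have "pdist B0 Bs \<le> pdist (fst (dgd \<alpha> Bs M ws B0 w0 T)) Bs"
    by (rule pdist_mono[OF BsI])
  then have "pdist (fst (dgd \<alpha> Bs M ws B0 w0 T)) Bs \<ge> 0.7 * \<delta>0" using pd0 assms(5) by simp
  then show ?thesis using BsI pd0 Bsw by blast
qed


end
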